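(* Let $F$ be an infinite field, let $k\ge 1$, let $\boldsymbol{X}=(X_1,\ldots,X_k)$ be a tuple of pairwise disjoint finite sets of variables, let $f\in F\langle \boldsymbol{X}\rangle = F\langle X_1\rangle\otimes_F\cdots\otimes_F F\langle X_k\rangle$, let $n\ge 1$, and let $L$ be a field extending $F$. Then the following are equivalent: (i) the partially commutative identity $f=0$ holds in $M_n(L)\otimes_F\cdots\otimes_F M_n(L)$ ($k$ factors), i.e. $\widetilde{\boldsymbol{v}}(f)=0$ for every valuation $\boldsymbol{v}=(v_1,\ldots,v_k)$ with $v_i:X_i\to M_n(L)$; (ii) $\Phi_n(f)=0$. Moreover, if $f$ has degree strictly less than $n$, then (i) and (ii) are both equivalent to each of: (iii) $\Psi_n(f)=0$; (iv) $f=0$ in $F\langle \boldsymbol{X}\rangle$.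
   Context: $F\langle X\rangle$ denotes the free $F$-algebra on a set $X$ (polynomials in non-commuting variables from $X$; monomials are words in $X^*$). For a tuple $\boldsymbol{X}=(X_1,\ldots,X_k)$ of pairwise disjoint sets, $F\langle \boldsymbol{X}\rangle := F\langle X_1\rangle\otimes_F\cdots\otimes_F F\langle X_k\rangle$; every element can be written uniquely as a finite $F$-linear combination of distinct monomials $m_1\otimes\cdots\otimes m_k$ with $m_j\in X_j^*$ (so $F\langle\boldsymbol{X}\rangle$ is the free $F$-algebra, i.e. monoid algebra, of $X_1^*\times\cdots\times X_k^*$). The degree of a monomial $m_1\otimes\cdots\otimes m_k$ is $|m_1|+\cdots+|m_k|$, and the degree of a polynomial is the maximum degree of its monomials. A valuation in $(A_1,\ldots,A_k)$ ($F$-algebras) is a tuple $\boldsymbol{v}=(v_1,\ldots,v_k)$ of maps $v_i:X_i\to A_i$; each extends uniquely to an $F$-algebra homomorphism $\widetilde{v_i}:F\langle X_i\rangle\to A_i$, and $\widetilde{\boldsymbol{v}}:=\widetilde{v_1}\otimes\cdots\otimes\widetilde{v_k}:F\langle\boldsymbol{X}\rangle\to A_1\otimes_F\cdots\otimes_F A_k$. Tensor products of matrix algebras are identified with algebras of larger matrices via the Kronecker product: for $a\times a$ matrix $M=(m_{ij})$ and $b\times b$ matrix $N$, $M\otimes N$ is the $ab\times ab$ block matrix with blocks $m_{ij}N$. Generic matrices: for a finite set $X$ and each $x\in X$, introduce commuting indeterminates $t^{(x)}_{ij}$, $1\le i,j\le n$. The generic matrix algebra $F_n\langle X\rangle$ is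 the $F$-algebra of $n\times n$ matrices (with entries polynomials in the $t^{(x)}_{ij}$) generated by the matrices $(t^{(x)}_{ij})_{i,j}$, $x\in X$, and $\Phi^X_n:F\langle X\rangle\to F_n\langle X\rangle$ is the $F$-algebra homomorphism with $\Phi^X_n(x)=(t^{(x)}_{ij})_{i,j}$. Also $\Psi^X_n$ is the $F$-algebra homomorphism from $F\langle X\rangle$ to $n\times n$ matrices over the polynomial ring in the $t^{(x)}_{ij}$ sending $x$ to the matrix whose only nonzero entries are $t^{(x)}_{12},t^{(x)}_{23},\ldots,t^{(x)}_{n-1,n}$ on the superdiagonal (positions $(i,i+1)$). Finally $\Phi_n:=\Phi^{X_1}_n\otimes\cdots\otimes\Phi^{X_k}_n:F\langle\boldsymbol{X}\rangle\to F_n\langle X_1\rangle\otimes\cdots\otimes F_n\langle X_k\rangle$ and $\Psi_n:=\Psi^{X_1}_n\otimes\cdots\otimes\Psi^{X_k}_n$, both with values in $n^k\times n^k$ matrices. *)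

theory Defs
  imports "Jordan_Normal_Form.Ring_Hom_Matrix" "HOL-Library.Poly_Mapping"
begin

text \<open>Partially commutative polynomials: an element of
  F<X_1> (x) ... (x) F<X_k> is a finitely supported map from monomials
  m_1 (x) ... (x) m_k (represented as lists of words of length k) to F.\<close>

definition pc_monomials :: "nat \<Rightarrow> (nat \<Rightarrow> 'v set) \<Rightarrow> 'v list list set" where
  "pc_monomials k X = {m. length m = k \<and> (\<forall>i<k. set (m ! i) \<subseteq> X i)}"

definition pc_poly :: "nat \<Rightarrow> (nat \<Rightarrow> 'v set) \<Rightarrow> ('v list list \<Rightarrow>\<^sub>0 'a::zero) \<Rightarrow> bool" where
  "pc_poly k X f \<longleftrightarrow> Poly_Mapping.keys f \<subseteq> pc_monomials k X"

definition pc_degree :: "('v list list \<Rightarrow>\<^sub>0 'a::zero) \<Rightarrow> nat" where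
  "pc_degree f = Max (insert 0 ((\<lambda>m. sum_list (map length m)) ` Poly_Mapping.keys f))"

definition word_mat :: "nat \<Rightarrow> ('v \<Rightarrow> 'b::semiring_1 mat) \<Rightarrow> 'v list \<Rightarrow> 'b mat" where
  "word_mat n v w = foldr (\<lambda>x A. v x * A) w (1\<^sub>m n)"

definition kron :: "'b::semiring_1 mat \<Rightarrow> 'b mat \<Rightarrow> 'b mat" where
  "kron M N = mat (dim_row M * dim_row N) (dim_col M * dim_col N)
     (\<lambda>(i, j). M $$ (i div dim_row N, j div dim_col N) * N $$ (i mod dim_row N, j mod dim_col N))"

fun kron_list :: "'b::semiring_1 mat list \<Rightarrow> 'b mat" where
  "kron_list [] = 1\<^sub>m 1"
| "kron_list (A # As) = kron A (kron_list As)"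

text \<open>Evaluation of f under the valuation (v_1,...,v_k) into n x n matrices,
  the tensor product being identified with n^k x n^k matrices via Kronecker product;
  emb maps the coefficient field into the entry ring.\<close>
definition pc_eval :: "nat \<Rightarrow> nat \<Rightarrow> ('a \<Rightarrow> 'b::semiring_1) \<Rightarrow> (nat \<Rightarrow> 'v \<Rightarrow> 'b mat)
    \<Rightarrow> ('v list list \<Rightarrow>\<^sub>0 'a::zero) \<Rightarrow> 'b mat" where
  "pc_eval n k emb v f = mat (n ^ k) (n ^ k) (\<lambda>rc.
      \<Sum>m\<in>Poly_Mapping.keys f. emb (Poly_Mapping.lookup f m) * kron_list (map (\<lambda>i. word_mat n (v i) (m ! i)) [0..<k]) $$ rc)"

text \<open>Polynomial ring over F in commuting indeterminates t^(x)_ij (indexed by (x,i,j)).\<close>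
type_synonym ('v, 'a) genpoly = "(('v \<times> nat \<times> nat) \<Rightarrow>\<^sub>0 nat) \<Rightarrow>\<^sub>0 'a"

definition tvar :: "'v \<Rightarrow> nat \<Rightarrow> nat \<Rightarrow> ('v, 'a::comm_ring_1) genpoly" where
  "tvar x i j = Poly_Mapping.single (Poly_Mapping.single (x, i, j) 1) 1"

definition const_poly :: "'a::comm_ring_1 \<Rightarrow> ('v, 'a) genpoly" where
  "const_poly c = Poly_Mapping.single 0 c"

text \<open>Generic matrix (t^(x)_ij) (indices 0-based).\<close>
definition generic_mat :: "nat \<Rightarrow> 'v \<Rightarrow> ('v, 'a::comm_ring_1) genpoly mat" where
  "generic_mat n x = mat n n (\<lambda>(i, j). tvar x i j)"

definition superdiag_mat :: "nat \<Rightarrow> 'v \<Rightarrow> ('v, 'a::comm_ring_1) genpoly mat" where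
  "superdiag_mat n x = mat n n (\<lambda>(i, j). if j = i + 1 then tvar x i j else 0)"

definition Phi :: "nat \<Rightarrow> nat \<Rightarrow> ('v list list \<Rightarrow>\<^sub>0 'a::comm_ring_1) \<Rightarrow> ('v, 'a) genpoly mat" where
  "Phi n k f = pc_eval n k const_poly (\<lambda>_. generic_mat n) f"

definition Psi :: "nat \<Rightarrow> nat \<Rightarrow> ('v list list \<Rightarrow>\<^sub>0 'a::comm_ring_1) \<Rightarrow> ('v, 'a) genpoly mat" where
  "Psi n k f = pc_eval n k const_poly (\<lambda>_. superdiag_mat n) f"

definition pc_identity :: "nat \<Rightarrow> nat \<Rightarrow> (nat \<Rightarrow> 'v set) \<Rightarrow> ('a \<Rightarrow> 'b::field)
    \<Rightarrow> ('v list list \<Rightarrow>\<^sub>0 'a::field) \<Rightarrow> bool" where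
  "pc_identity n k X emb f \<longleftrightarrow>
     (\<forall>v. (\<forall>i<k. \<forall>x\<in>X i. v i x \<in> carrier_mat n n) \<longrightarrow> pc_eval n k emb v f = 0\<^sub>m (n ^ k) (n ^ k))"

end

theory Submission
  imports Defs "HOL-Computational_Algebra.Polynomial"
begin

section \<open>Evaluation of polynomials\<close>

definition evalm :: "('w \<Rightarrow> 'b::comm_semiring_1) \<Rightarrow> ('w \<Rightarrow>\<^sub>0 nat) \<Rightarrow> 'b" where
  "evalm q \<mu> = (\<Prod>y\<in>Poly_Mapping.keys \<mu>. q y ^ Poly_Mapping.lookup \<mu> y)"

lemma evalm_superset:
  assumes "finite S" "Poly_Mapping.keys \<mu> \<subseteq> S"
  shows "evalm q \<mu> = (\<Prod>y\<in>S. q y ^ Poly_Mapping.lookup \<mu> y)"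
  unfolding evalm_def
  by (rule prod.mono_neutral_left[OF assms(1) assms(2)]) (auto simp: in_keys_iff)

lemma evalm_add: "evalm q (\<mu> + \<nu>) = evalm q \<mu> * evalm q \<nu>"
proof -
  let ?S = "Poly_Mapping.keys \<mu> \<union> Poly_Mapping.keys \<nu>"
  have f: "finite ?S" by simp
  have "Poly_Mapping.keys (\<mu> + \<nu>) \<subseteq> ?S" by (rule keys_add)
  then have "evalm q (\<mu> + \<nu>) = (\<Prod>y\<in>?S. q y ^ Poly_Mapping.lookup (\<mu> + \<nu>) y)"
    using evalm_superset[OF f] by blast
  also have "\<dots> = (\<Prod>y\<in>?S. q y ^ Poly_Mapping.lookup \<mu> y) * (\<Prod>y\<in>?S. q y ^ Poly_Mapping.lookup \<nu> y)"
    by (simp add: lookup_add power_add prod.distrib)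
  also have "\<dots> = evalm q \<mu> * evalm q \<nu>"
    using evalm_superset[OF f, of \<mu> q] evalm_superset[OF f, of \<nu> q] by auto
  finally show ?thesis .
qed

lemma evalm_zero[simp]: "evalm q 0 = 1"
  by (simp add: evalm_def)

lemma evalm_single[simp]: "evalm q (Poly_Mapping.single y d) = q y ^ d"
  by (simp add: evalm_def)

lemma evalm_sum: "evalm q (sum F A) = (\<Prod>a\<in>A. evalm q (F a))"
  by (induction A rule: infinite_finite_induct) (auto simp: evalm_add)

lemma evalm_cong: "(\<And>y. y \<in> Poly_Mapping.keys \<mu> \<Longrightarrow> q y = q' y) \<Longrightarrow> evalm q \<mu> = evalm q' \<mu>"
  unfolding evalm_def by (rule prod.cong) auto

lemma (in comm_semiring_hom) evalm_hom: "evalm (hom \<circ> q) \<mu> = hom (evalm q \<mu>)"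
  unfolding evalm_def by (simp add: hom_distribs)

definition evalp :: "('a::zero \<Rightarrow> 'b::comm_semiring_1) \<Rightarrow> ('w \<Rightarrow> 'b) \<Rightarrow> (('w \<Rightarrow>\<^sub>0 nat) \<Rightarrow>\<^sub>0 'a) \<Rightarrow> 'b" where
  "evalp e q P = (\<Sum>\<mu>\<in>Poly_Mapping.keys P. e (Poly_Mapping.lookup P \<mu>) * evalm q \<mu>)"

lemma evalp_superset:
  assumes "e 0 = 0" "finite S" "Poly_Mapping.keys P \<subseteq> S"
  shows "evalp e q P = (\<Sum>\<mu>\<in>S. e (Poly_Mapping.lookup P \<mu>) * evalm q \<mu>)"
  unfolding evalp_def
  by (rule sum.mono_neutral_left[OF assms(2) assms(3)]) (auto simp: in_keys_iff assms(1))

lemma evalp_add: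
  assumes "comm_monoid_add_hom e"
  shows "evalp e q (P + Q) = evalp e q P + evalp e q Q"
proof -
  interpret comm_monoid_add_hom e by fact
  let ?S = "Poly_Mapping.keys P \<union> Poly_Mapping.keys Q"
  have f: "finite ?S" by simp
  have "Poly_Mapping.keys (P + Q) \<subseteq> ?S" by (rule keys_add)
  then have "evalp e q (P + Q) = (\<Sum>\<mu>\<in>?S. e (Poly_Mapping.lookup (P + Q) \<mu>) * evalm q \<mu>)"
    using evalp_superset[where e=e, OF hom_zero f] by blast
  also have "\<dots> = (\<Sum>\<mu>\<in>?S. e (Poly_Mapping.lookup P \<mu>) * evalm q \<mu>) + (\<Sum>\<mu>\<in>?S. e (Poly_Mapping.lookup Q \<mu>) * evalm q \<mu>)"
    by (simp add: lookup_add hom_add distrib_right sum.distrib)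
  also have "\<dots> = evalp e q P + evalp e q Q"
    using evalp_superset[where e=e and P=P and q=q, OF hom_zero f] evalp_superset[where e=e and P=Q and q=q, OF hom_zero f] by auto
  finally show ?thesis .
qed

lemma evalp_zero[simp]: "evalp e q 0 = 0"
  by (simp add: evalp_def)

lemma evalp_single:
  assumes "e 0 = 0"
  shows "evalp e q (Poly_Mapping.single \<mu> c) = e c * evalm q \<mu>"
  using assms by (simp add: evalp_def)

lemma evalp_sum:
  assumes "comm_monoid_add_hom e"
  shows "evalp e q (sum F A) = (\<Sum>a\<in>A. evalp e q (F a))"
  by (induction A rule: infinite_finite_induct) (auto simp: evalp_add[OF assms])

lemma poly_mapping_sum_singles:
  "P = (\<Sum>\<mu>\<in>Poly_Mapping.keys P. Poly_Mapping.single \<mu> (Poly_Mapping.lookup P \<mu>))"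
proof (rule poly_mapping_eqI)
  fix \<nu>
  show "Poly_Mapping.lookup P \<nu> = Poly_Mapping.lookup (\<Sum>\<mu>\<in>Poly_Mapping.keys P. Poly_Mapping.single \<mu> (Poly_Mapping.lookup P \<mu>)) \<nu>"
    by (cases "\<nu> \<in> Poly_Mapping.keys P") (auto simp: lookup_sum lookup_single when_def in_keys_iff)
qed

lemma evalp_mult:
  assumes "comm_semiring_hom e"
  shows "evalp e q (P * Q) = evalp e q P * evalp e q Q"
proof -
  interpret comm_semiring_hom e by fact
  have h: "comm_monoid_add_hom e" by unfold_locales
  have "P * Q = (\<Sum>\<mu>\<in>Poly_Mapping.keys P. Poly_Mapping.single \<mu> (Poly_Mapping.lookup P \<mu>)) *
      (\<Sum>\<nu>\<in>Poly_Mapping.keys Q. Poly_Mapping.single \<nu> (Poly_Mapping.lookup Q \<nu>))"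
    using poly_mapping_sum_singles[of P] poly_mapping_sum_singles[of Q] by simp
  also have "\<dots> = (\<Sum>\<mu>\<in>Poly_Mapping.keys P. \<Sum>\<nu>\<in>Poly_Mapping.keys Q.
      Poly_Mapping.single (\<mu> + \<nu>) (Poly_Mapping.lookup P \<mu> * Poly_Mapping.lookup Q \<nu>))"
    by (simp add: sum_product mult_single)
  finally have "evalp e q (P * Q) = (\<Sum>\<mu>\<in>Poly_Mapping.keys P. \<Sum>\<nu>\<in>Poly_Mapping.keys Q.
      e (Poly_Mapping.lookup P \<mu>) * evalm q \<mu> * (e (Poly_Mapping.lookup Q \<nu>) * evalm q \<nu>))"
    by (simp add: evalp_sum[OF h] evalp_single hom_mult evalm_add mult_ac)
  also have "\<dots> = evalp e q P * evalp e q Q"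
    by (simp add: evalp_def sum_product)
  finally show ?thesis .
qed

lemma evalp_one:
  assumes "e 0 = 0" "e 1 = 1"
  shows "evalp e q 1 = 1"
  using evalp_single[of e q 0 1] assms by simp

lemma evalp_hom:
  assumes "comm_ring_hom e"
  shows "comm_ring_hom (evalp e q)"
proof -
  interpret comm_ring_hom e by fact
  have h1: "comm_monoid_add_hom e" by unfold_locales
  have h2: "comm_semiring_hom e" by unfold_locales
  show ?thesis
    by unfold_locales (auto simp: evalp_add[OF h1] evalp_mult[OF h2] evalp_one)
qed

lemma (in comm_semiring_hom) evalp_hom_emb:
  "evalp hom (hom \<circ> q) P = hom (evalp (\<lambda>x. x) q P)"
  unfolding evalp_def by (simp add: hom_distribs evalm_hom)


section \<open>Vanishing polynomials over infinite fields\<close>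

lemma univariate_zero:
  fixes a :: "nat \<Rightarrow> 'a::field"
  assumes inf: "infinite (UNIV :: 'a set)" and D: "finite D"
    and z: "\<And>t. (\<Sum>d\<in>D. a d * t ^ d) = 0"
  shows "\<forall>d\<in>D. a d = 0"
proof -
  define p where "p = (\<Sum>d\<in>D. monom (a d) d)"
  have ev: "poly p t = (\<Sum>d\<in>D. a d * t ^ d)" for t
    by (simp add: p_def poly_sum poly_monom)
  have "p = 0"
  proof (rule ccontr)
    assume "p \<noteq> 0"
    then have "finite {t. poly p t = 0}" by (rule poly_roots_finite)
    moreover have "{t. poly p t = 0} = UNIV" using ev z by auto
    ultimately show False using inf by simp
  qed
  show ?thesis
  proof
    fix d assume dD: "d \<in> D"
    have "coeff p d = (\<Sum>d'\<in>D. if d' = d then a d' else 0)"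
      by (simp add: p_def coeff_sum)
    also have "\<dots> = a d" using dD D by (simp add: sum.delta)
    finally show "a d = 0" using \<open>p = 0\<close> by simp
  qed
qed

lemma multivariate_zero_aux:
  fixes c :: "'i \<Rightarrow> 'a::field" and \<phi> :: "'i \<Rightarrow> ('w \<Rightarrow>\<^sub>0 nat)"
  assumes inf: "infinite (UNIV :: 'a set)" and V: "finite V"
  shows "\<forall>(I::'i set) (\<phi>::'i \<Rightarrow> ('w \<Rightarrow>\<^sub>0 nat)) (c::'i \<Rightarrow> 'a). finite I \<longrightarrow> inj_on \<phi> I \<longrightarrow> (\<forall>i\<in>I. Poly_Mapping.keys (\<phi> i) \<subseteq> V) \<longrightarrow>
    (\<forall>q. (\<Sum>i\<in>I. c i * evalm q (\<phi> i)) = (0::'a)) \<longrightarrow> (\<forall>i\<in>I. c i = 0)"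
  using V
proof (induction V rule: finite_induct)
  case empty
  show ?case
  proof (intro allI impI ballI)
    fix I and \<phi> :: "'i \<Rightarrow> ('w \<Rightarrow>\<^sub>0 nat)" and c :: "'i \<Rightarrow> 'a" and i
    assume fI: "finite I" and inj: "inj_on \<phi> I" and ks: "\<forall>i\<in>I. Poly_Mapping.keys (\<phi> i) \<subseteq> {}"
      and z: "\<forall>q. (\<Sum>i\<in>I. c i * evalm q (\<phi> i)) = 0" and iI: "i \<in> I"
    have \<phi>0: "\<phi> j = 0" if "j \<in> I" for j using ks that by auto
    have "I = {i}"
    proof
      show "I \<subseteq> {i}" using inj \<phi>0 iI by (auto simp: inj_on_def)
    qed (use iI in auto)
    then show "c i = 0" using z \<phi>0[OF iI] by simp
  qed
next
  case (insert y V)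
  show ?case
  proof (intro allI impI ballI)
    fix I and \<phi> :: "'i \<Rightarrow> ('w \<Rightarrow>\<^sub>0 nat)" and c :: "'i \<Rightarrow> 'a" and i
    assume fI: "finite I" and inj: "inj_on \<phi> I" and ks: "\<forall>i\<in>I. Poly_Mapping.keys (\<phi> i) \<subseteq> insert y V"
      and z: "\<forall>q. (\<Sum>i\<in>I. c i * evalm q (\<phi> i)) = 0" and iI: "i \<in> I"
    define \<psi> where "\<psi> j = Poly_Mapping.update y 0 (\<phi> j)" for j
    define deg where "deg j = Poly_Mapping.lookup (\<phi> j) y" for j
    define D where "D = deg ` I"
    have fD: "finite D" using fI by (simp add: D_def)
    have split: "\<phi> j = \<psi> j + Poly_Mapping.single y (deg j)" for j
      by (rule poly_mapping_eqI) (auto simp: \<psi>_def deg_def lookup_add lookup_update lookup_single when_def)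
    have ks\<psi>: "Poly_Mapping.keys (\<psi> j) \<subseteq> V" if "j \<in> I" for j
      using ks that insert.hyps(2) by (auto simp: \<psi>_def keys_update)
    have y\<psi>: "y \<notin> Poly_Mapping.keys (\<psi> j)" if "j \<in> I" for j
      using ks\<psi>[OF that] insert.hyps(2) by auto
    have coef: "(\<Sum>j\<in>{j\<in>I. deg j = d}. c j * evalm q (\<psi> j)) = 0" if "d \<in> D" for q d
    proof -
      define A where "A d' = (\<Sum>j\<in>{j\<in>I. deg j = d'}. c j * evalm q (\<psi> j))" for d'
      have "\<forall>d\<in>D. A d = 0"
      proof (rule univariate_zero[OF inf fD])
        fix t
        let ?q = "q(y := t)"
        have e\<psi>: "evalm ?q (\<psi> j) = evalm q (\<psi> j)" if "j \<in> I" for j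
          by (rule evalm_cong) (use y\<psi>[OF that] in auto)
        have "0 = (\<Sum>j\<in>I. c j * evalm ?q (\<phi> j))" using z by simp
        also have "\<dots> = (\<Sum>j\<in>I. c j * evalm q (\<psi> j) * t ^ deg j)"
          by (rule sum.cong[OF refl]) (simp add: split[of _] evalm_add e\<psi> mult.assoc del: fun_upd_apply, simp)
        also have "\<dots> = (\<Sum>d\<in>D. \<Sum>j\<in>{j\<in>I. deg j = d}. c j * evalm q (\<psi> j) * t ^ deg j)"
          by (rule sum.group[symmetric]) (use fI fD in \<open>auto simp: D_def\<close>)
        also have "\<dots> = (\<Sum>d\<in>D. A d * t ^ d)"
          by (simp add: A_def sum_distrib_right)
        finally show "(\<Sum>d\<in>D. A d * t ^ d) = 0" by simp
      qed
      then show ?thesis using that by (simp add: A_def)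
    qed
    let ?d = "deg i"
    have dD: "?d \<in> D" using iI by (simp add: D_def)
    define J where "J = {j\<in>I. deg j = ?d}"
    have h1: "finite J" using fI by (simp add: J_def)
    have h2: "inj_on \<psi> J"
    proof (rule inj_onI)
      fix j j' assume "j \<in> J" "j' \<in> J" "\<psi> j = \<psi> j'"
      then have "\<phi> j = \<phi> j'" using split[of j] split[of j'] by (simp add: J_def)
      then show "j = j'" using inj \<open>j \<in> J\<close> \<open>j' \<in> J\<close> by (auto simp: inj_on_def J_def)
    qed
    have h3: "\<forall>j\<in>J. Poly_Mapping.keys (\<psi> j) \<subseteq> V" using ks\<psi> by (auto simp: J_def)
    have h4: "\<forall>q. (\<Sum>j\<in>J. c j * evalm q (\<psi> j)) = 0" using coef[OF dD] by (simp add: J_def)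
    note IH0 = insert.IH[THEN spec[where x=J], THEN spec[where x=\<psi>], THEN spec[where x=c]]
    have IH: "\<forall>j\<in>J. c j = 0" using IH0 h1 h2 h3 h4 by blast
    then show "c i = 0" using iI by (auto simp: J_def)
  qed
qed

lemma multivariate_zero:
  fixes c :: "'i \<Rightarrow> 'a::field" and \<phi> :: "'i \<Rightarrow> ('w \<Rightarrow>\<^sub>0 nat)"
  assumes inf: "infinite (UNIV :: 'a set)" and fI: "finite I" and inj: "inj_on \<phi> I"
    and z: "\<And>q. (\<Sum>i\<in>I. c i * evalm q (\<phi> i)) = 0" and iI: "i \<in> I"
  shows "c i = 0"
  using multivariate_zero_aux[OF inf, of "\<Union>j\<in>I. Poly_Mapping.keys (\<phi> j)"] fI inj z iI by auto

lemma poly_zero: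
  fixes P :: "('w \<Rightarrow>\<^sub>0 nat) \<Rightarrow>\<^sub>0 'a::field" and emb :: "'a \<Rightarrow> 'b::field"
  assumes inf: "infinite (UNIV :: 'a set)" and fh: "field_hom emb"
    and z: "\<And>p. evalp emb p P = 0"
  shows "P = 0"
proof -
  interpret field_hom emb by fact
  have z': "(\<Sum>\<mu>\<in>Poly_Mapping.keys P. Poly_Mapping.lookup P \<mu> * evalm q (id \<mu>)) = 0" for q
  proof -
    have "emb (evalp (\<lambda>x. x) q P) = 0" using z[of "emb \<circ> q"] by (simp only: evalp_hom_emb)
    then have "evalp (\<lambda>x. x) q P = 0" by simp
    then show ?thesis by (simp add: evalp_def)
  qed
  have "Poly_Mapping.lookup P \<mu> = 0" if "\<mu> \<in> Poly_Mapping.keys P" for \<mu>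
    by (rule multivariate_zero[OF inf _ _ z' that]) auto
  then show ?thesis by (metis keys_eq_empty in_keys_iff equals0I)
qed


lemma kron_carrier:
  "A \<in> carrier_mat a a \<Longrightarrow> B \<in> carrier_mat b b \<Longrightarrow> kron A B \<in> carrier_mat (a * b) (a * b)"
  by (simp add: kron_def)

lemma kron_list_carrier:
  "(\<forall>A\<in>set As. A \<in> carrier_mat n n) \<Longrightarrow> kron_list As \<in> carrier_mat (n ^ length As) (n ^ length As)"
  by (induction As) (auto intro: kron_carrier)

lemma word_mat_carrier:
  "(\<forall>x\<in>set w. V x \<in> carrier_mat n n) \<Longrightarrow> word_mat n V w \<in> carrier_mat n n"
  by (induction w) (auto simp: word_mat_def)

lemma word_mat_Cons: "word_mat n V (x # w) = V x * word_mat n V w"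
  by (simp add: word_mat_def)

lemma word_mat_cong:
  "(\<forall>x\<in>set w. V x = V' x) \<Longrightarrow> word_mat n V w = word_mat n V' w"
  by (induction w) (auto simp: word_mat_def)

lemma (in semiring_hom) kron_hom:
  "map_mat hom (kron A B) = kron (map_mat hom A) (map_mat hom B)"
proof (rule eq_matI)
  fix i j assume i: "i < dim_row (kron (map_mat hom A) (map_mat hom B))"
    and j: "j < dim_col (kron (map_mat hom A) (map_mat hom B))"
  have i': "i < dim_row A * dim_row B" and j': "j < dim_col A * dim_col B"
    using i j by (auto simp: kron_def)
  have "0 < dim_row B" "0 < dim_col B" using i' j' by (auto intro: gr0I)
  then have "i div dim_row B < dim_row A" "j div dim_col B < dim_col A"
    "i mod dim_row B < dim_row B" "j mod dim_col B < dim_col B"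
    using i' j' by (auto simp: less_mult_imp_div_less)
  then show "map_mat hom (kron A B) $$ (i, j) = kron (map_mat hom A) (map_mat hom B) $$ (i, j)"
    using i' j' by (simp add: kron_def hom_mult)
qed (auto simp: kron_def)

lemma (in semiring_hom) kron_list_hom:
  "map_mat hom (kron_list As) = kron_list (map (map_mat hom) As)"
  by (induction As) (auto simp: kron_hom mat_hom_one)

lemma (in semiring_hom) word_mat_hom:
  "(\<forall>x\<in>set w. V x \<in> carrier_mat n n) \<Longrightarrow>
    map_mat hom (word_mat n V w) = word_mat n (\<lambda>x. map_mat hom (V x)) w"
proof (induction w)
  case Nil
  then show ?case by (simp add: word_mat_def mat_hom_one)
next
  case (Cons x w)
  have c: "word_mat n V w \<in> carrier_mat n n" using Cons.prems by (auto intro: word_mat_carrier)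
  have vx: "V x \<in> carrier_mat n n" using Cons.prems by simp
  show ?case using Cons.IH Cons.prems mat_hom_mult[OF vx c] by (simp add: word_mat_Cons)
qed

lemma (in semiring_hom) pc_eval_hom:
  assumes V: "\<And>i x. V i x \<in> carrier_mat n n"
  shows "map_mat hom (pc_eval n k e V f) = pc_eval n k (hom \<circ> e) (\<lambda>i x. map_mat hom (V i x)) f"
proof (rule eq_matI)
  fix r c assume r: "r < dim_row (pc_eval n k (hom \<circ> e) (\<lambda>i x. map_mat hom (V i x)) f)"
    and c: "c < dim_col (pc_eval n k (hom \<circ> e) (\<lambda>i x. map_mat hom (V i x)) f)"
  then have r': "r < n ^ k" and c': "c < n ^ k" by (auto simp: pc_eval_def)
  have car: "kron_list (map (\<lambda>i. word_mat n (V i) (m ! i)) [0..<k]) \<in> carrier_mat (n ^ k) (n ^ k)" for m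
  proof -
    have "\<forall>A\<in>set (map (\<lambda>i. word_mat n (V i) (m ! i)) [0..<k]). A \<in> carrier_mat n n"
      using V by (auto intro!: word_mat_carrier)
    from kron_list_carrier[OF this] show ?thesis by simp
  qed
  have "hom (kron_list (map (\<lambda>i. word_mat n (V i) (m ! i)) [0..<k]) $$ (r, c)) =
     kron_list (map (\<lambda>i. word_mat n (\<lambda>x. map_mat hom (V i x)) (m ! i)) [0..<k]) $$ (r, c)" for m
  proof -
    have "hom (kron_list (map (\<lambda>i. word_mat n (V i) (m ! i)) [0..<k]) $$ (r, c)) =
      map_mat hom (kron_list (map (\<lambda>i. word_mat n (V i) (m ! i)) [0..<k])) $$ (r, c)"
      using car[of m] r' c' by simp
    also have "\<dots> = kron_list (map (\<lambda>i. word_mat n (\<lambda>x. map_mat hom (V i x)) (m ! i)) [0..<k]) $$ (r, c)"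
      by (simp add: kron_list_hom word_mat_hom V o_def)
    finally show ?thesis .
  qed
  then show "map_mat hom (pc_eval n k e V f) $$ (r, c) =
      pc_eval n k (hom \<circ> e) (\<lambda>i x. map_mat hom (V i x)) f $$ (r, c)"
    using r' c' by (simp add: pc_eval_def hom_distribs)
qed (auto simp: pc_eval_def)

lemma pc_eval_cong:
  assumes "pc_poly k X f" and "\<And>i x. i < k \<Longrightarrow> x \<in> X i \<Longrightarrow> V i x = V' i x"
  shows "pc_eval n k e V f = pc_eval n k e V' f"
proof -
  have "word_mat n (V i) (m ! i) = word_mat n (V' i) (m ! i)" if "m \<in> Poly_Mapping.keys f" "i < k" for m i
  proof (rule word_mat_cong, intro ballI)
    fix x assume "x \<in> set (m ! i)"
    then have "x \<in> X i" using assms(1) that by (auto simp: pc_poly_def pc_monomials_def)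
    then show "V i x = V' i x" using assms(2) that by simp
  qed
  then show ?thesis unfolding pc_eval_def
    by (intro arg_cong[where f="mat _ _"] ext sum.cong refl arg_cong2[where f="(*)"]
        arg_cong2[where f="($$)"] arg_cong[where f=kron_list]) auto
qed


section \<open>Generic evaluation\<close>

lemma field_hom_crh: "field_hom emb \<Longrightarrow> comm_ring_hom emb"
  by (simp add: field_hom_def idom_hom_def)

lemma evalp_tvar:
  assumes "comm_ring_hom emb"
  shows "evalp emb p (tvar x a b) = p (x, a, b)"
proof -
  interpret comm_ring_hom emb by fact
  show ?thesis by (simp add: tvar_def evalp_single)
qed

lemma evalp_const:
  assumes "comm_ring_hom emb"
  shows "evalp emb p \<circ> const_poly = emb"
proof -
  interpret comm_ring_hom emb by fact
  show ?thesis by (rule ext) (simp add: const_poly_def evalp_single)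
qed

lemma eval_generic_mat:
  assumes "comm_ring_hom emb"
  shows "map_mat (evalp emb p) (generic_mat n x) = mat n n (\<lambda>(a, b). p (x, a, b))"
  by (rule eq_matI) (auto simp: generic_mat_def evalp_tvar[OF assms])

lemma eval_superdiag_mat:
  assumes "comm_ring_hom emb"
  shows "map_mat (evalp emb p) (superdiag_mat n x) = mat n n (\<lambda>(a, b). if b = a + 1 then p (x, a, b) else 0)"
  by (rule eq_matI) (auto simp: superdiag_mat_def evalp_tvar[OF assms])

lemma eval_pc_generic:
  fixes M :: "'v \<Rightarrow> ('w, 'a::field) genpoly mat" and emb :: "'a \<Rightarrow> 'b::field"
  assumes fh: "field_hom emb" and M: "\<And>x. M x \<in> carrier_mat n n"
  shows "map_mat (evalp emb p) (pc_eval n k const_poly (\<lambda>_. M) f) =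
    pc_eval n k emb (\<lambda>_ x. map_mat (evalp emb p) (M x)) f"
proof -
  have crh: "comm_ring_hom emb" using fh by (rule field_hom_crh)
  interpret E: comm_ring_hom "evalp emb p" by (rule evalp_hom[OF crh])
  show ?thesis using E.pc_eval_hom[of "\<lambda>_. M" n k const_poly f] M by (simp add: evalp_const[OF crh])
qed

lemma poly_mat_zero:
  fixes P :: "('w, 'a::field) genpoly mat" and emb :: "'a \<Rightarrow> 'b::field"
  assumes inf: "infinite (UNIV :: 'a set)" and fh: "field_hom emb"
    and P: "P \<in> carrier_mat N N" and z: "\<And>p. map_mat (evalp emb p) P = 0\<^sub>m N N"
  shows "P = 0\<^sub>m N N"
proof (rule eq_matI)
  fix i j assume i: "i < dim_row (0\<^sub>m N N :: ('w, 'a) genpoly mat)" and j: "j < dim_col (0\<^sub>m N N :: ('w, 'a) genpoly mat)"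
  have "P $$ (i, j) = 0"
  proof (rule poly_zero[OF inf fh])
    fix p
    have "map_mat (evalp emb p) P $$ (i, j) = 0" using z[of p] i j by simp
    then show "evalp emb p (P $$ (i, j)) = 0" using P i j by simp
  qed
  then show "P $$ (i, j) = 0\<^sub>m N N $$ (i, j)" using i j by simp
qed (use P in auto)

lemma pc_eval_carrier: "pc_eval n k e V f \<in> carrier_mat (n ^ k) (n ^ k)"
  by (simp add: pc_eval_def)

lemma pc_eval_zero: "pc_eval n k e V 0 = 0\<^sub>m (n ^ k) (n ^ k)"
  by (rule eq_matI) (auto simp: pc_eval_def)

lemma identity_imp_generic_zero:
  fixes M :: "'v \<Rightarrow> ('v, 'a::field) genpoly mat" and emb :: "'a \<Rightarrow> 'b::field"
  assumes inf: "infinite (UNIV :: 'a set)" and fh: "field_hom emb" and M: "\<And>x. M x \<in> carrier_mat n n"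
    and id: "pc_identity n k X emb f"
  shows "pc_eval n k const_poly (\<lambda>_. M) f = 0\<^sub>m (n ^ k) (n ^ k)"
proof (rule poly_mat_zero[OF inf fh pc_eval_carrier])
  fix p
  have "map_mat (evalp emb p) (pc_eval n k const_poly (\<lambda>_. M) f) =
    pc_eval n k emb (\<lambda>_ x. map_mat (evalp emb p) (M x)) f"
    by (rule eval_pc_generic[OF fh M])
  also have "\<dots> = 0\<^sub>m (n ^ k) (n ^ k)"
    using id M unfolding pc_identity_def by auto
  finally show "map_mat (evalp emb p) (pc_eval n k const_poly (\<lambda>_. M) f) = 0\<^sub>m (n ^ k) (n ^ k)" .
qed

lemma generic_zero_imp_eval_zero:
  fixes M :: "'v \<Rightarrow> ('v, 'a::field) genpoly mat" and emb :: "'a \<Rightarrow> 'b::field"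
  assumes fh: "field_hom emb" and M: "\<And>x. M x \<in> carrier_mat n n"
    and z: "pc_eval n k const_poly (\<lambda>_. M) f = 0\<^sub>m (n ^ k) (n ^ k)"
  shows "pc_eval n k emb (\<lambda>_ x. map_mat (evalp emb p) (M x)) f = 0\<^sub>m (n ^ k) (n ^ k)"
proof -
  have "pc_eval n k emb (\<lambda>_ x. map_mat (evalp emb p) (M x)) f =
    map_mat (evalp emb p) (pc_eval n k const_poly (\<lambda>_. M) f)"
    by (rule eval_pc_generic[OF fh M, symmetric])
  also have "\<dots> = 0\<^sub>m (n ^ k) (n ^ k)"
  proof -
    interpret E: comm_ring_hom "evalp emb p" by (rule evalp_hom[OF field_hom_crh[OF fh]])
    show ?thesis unfolding z by (rule eq_matI) auto
  qed
  finally show ?thesis .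
qed

lemma Phi_zero_imp_identity:
  fixes f :: "'v list list \<Rightarrow>\<^sub>0 'a::field" and emb :: "'a \<Rightarrow> 'b::field"
  assumes fh: "field_hom emb"
    and disj: "\<forall>i<k. \<forall>j<k. i \<noteq> j \<longrightarrow> X i \<inter> X j = {}"
    and pc: "pc_poly k X f"
    and z: "Phi n k f = 0\<^sub>m (n ^ k) (n ^ k)"
  shows "pc_identity n k X emb f"
  unfolding pc_identity_def
proof (intro allI impI)
  fix v :: "nat \<Rightarrow> 'v \<Rightarrow> 'b mat"
  assume v: "\<forall>i<k. \<forall>x\<in>X i. v i x \<in> carrier_mat n n"
  define idx where "idx x = (SOME i. i < k \<and> x \<in> X i)" for x
  have idx: "idx x = i" if "i < k" "x \<in> X i" for i x
  proof -
    have "idx x < k \<and> x \<in> X (idx x)" unfolding idx_def by (rule someI[of _ i]) (use that in auto)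
    then show ?thesis using disj that by blast
  qed
  define p where "p = (\<lambda>(x, a, b). v (idx x) x $$ (a, b))"
  have crh: "comm_ring_hom emb" using fh by (rule field_hom_crh)
  have "pc_eval n k emb (\<lambda>_ x. map_mat (evalp emb p) (generic_mat n x)) f = 0\<^sub>m (n ^ k) (n ^ k)"
    by (rule generic_zero_imp_eval_zero[OF fh _ z[unfolded Phi_def]]) (simp add: generic_mat_def)
  moreover have "pc_eval n k emb (\<lambda>_ x. map_mat (evalp emb p) (generic_mat n x)) f = pc_eval n k emb v f"
  proof (rule pc_eval_cong[OF pc])
    fix i x assume "i < k" "x \<in> X i"
    then have "v i x \<in> carrier_mat n n" "idx x = i" using v idx by auto
    then show "map_mat (evalp emb p) (generic_mat n x) = v i x"
      by (auto simp: eval_generic_mat[OF crh] p_def intro!: eq_matI)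
  qed
  ultimately show "pc_eval n k emb v f = 0\<^sub>m (n ^ k) (n ^ k)" by simp
qed


section \<open>Superdiagonal evaluations\<close>

fun colx :: "nat \<Rightarrow> nat list \<Rightarrow> nat" where
  "colx n [] = 0"
| "colx n (l # L) = l * n ^ length L + colx n L"

lemma colx_less: "(\<forall>l\<in>set L. l < n) \<Longrightarrow> colx n L < n ^ length L"
proof (induction L)
  case Nil
  then show ?case by simp
next
  case (Cons l L)
  have "colx n (l # L) < l * n ^ length L + n ^ length L" using Cons by simp
  also have "\<dots> = (l + 1) * n ^ length L" by simp
  also have "\<dots> \<le> n * n ^ length L" using Cons.prems by (intro mult_right_mono) auto
  finally show ?case by simp
qed

lemma kron_list_entry:
  assumes "\<forall>A\<in>set As. A \<in> carrier_mat n n" "length L = length As" "\<forall>l\<in>set L. l < n"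
  shows "kron_list As $$ (0, colx n L) = (\<Prod>j<length As. As ! j $$ (0, L ! j))"
  using assms
proof (induction As arbitrary: L)
  case Nil
  then show ?case by simp
next
  case (Cons A As)
  obtain l L' where L: "L = l # L'" using Cons.prems(2) by (cases L) auto
  let ?m = "length As"
  have K: "kron_list As \<in> carrier_mat (n ^ ?m) (n ^ ?m)" using Cons.prems(1) by (intro kron_list_carrier) auto
  have A: "A \<in> carrier_mat n n" using Cons.prems(1) by simp
  have lL': "length L' = ?m" using Cons.prems(2) L by simp
  have c1: "colx n L' < n ^ ?m" using colx_less[of L' n] Cons.prems(3) L lL' by simp
  have c2: "colx n L < n * n ^ ?m" using colx_less[of L n] Cons.prems(3) L lL' by simp
  have ln: "l < n" using Cons.prems(3) L by simp
  have npos: "0 < n ^ ?m" using ln by simp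
  have div: "colx n L div n ^ ?m = l" and md: "colx n L mod n ^ ?m = colx n L'"
    using c1 L lL' npos by (auto simp: div_add1_eq)
  have "kron_list (A # As) $$ (0, colx n L) = A $$ (0, l) * kron_list As $$ (0, colx n L')"
  proof -
    have p2: "0 < n * n ^ ?m" using ln by simp
    have "kron_list (A # As) $$ (0, colx n L) = A $$ (0 div n ^ ?m, colx n L div n ^ ?m) *
       kron_list As $$ (0 mod n ^ ?m, colx n L mod n ^ ?m)"
      using K A c2 p2 unfolding kron_list.simps kron_def by (subst index_mat) auto
    then show ?thesis using div md by simp
  qed
  also have "\<dots> = A $$ (0, l) * (\<Prod>j<?m. As ! j $$ (0, L' ! j))"
    using Cons.IH[of L'] Cons.prems lL' L by simp
  also have "\<dots> = (\<Prod>j<length (A # As). (A # As) ! j $$ (0, L ! j))"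
    by (simp add: L prod.lessThan_Suc_shift del: prod.lessThan_Suc)
  finally show ?case .
qed

lemma word_superdiag_entry:
  fixes g :: "'v \<Rightarrow> nat \<Rightarrow> nat \<Rightarrow> 'b::comm_semiring_1"
  assumes "a + length w < n" "b < n"
  shows "word_mat n (\<lambda>x. mat n n (\<lambda>(i, j). if j = i + 1 then g x i j else 0)) w $$ (a, b) =
    (if b = a + length w then \<Prod>s<length w. g (w ! s) (a + s) (a + s + 1) else 0)"
  using assms
proof (induction w arbitrary: a)
  case Nil
  then show ?case by (simp add: word_mat_def)
next
  case (Cons x w)
  let ?V = "\<lambda>x. mat n n (\<lambda>(i, j). if j = i + 1 then g x i j else 0)"
  let ?W = "word_mat n ?V w"
  have W: "?W \<in> carrier_mat n n" by (rule word_mat_carrier) auto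
  have a1: "a + 1 < n" using Cons.prems by simp
  have "word_mat n ?V (x # w) $$ (a, b) = (\<Sum>i\<in>{0..<n}. ?V x $$ (a, i) * ?W $$ (i, b))"
    using W Cons.prems by (simp add: word_mat_Cons scalar_prod_def)
  also have "\<dots> = (\<Sum>i\<in>{0..<n}. if i = a + 1 then g x a (a + 1) * ?W $$ (a + 1, b) else 0)"
    using Cons.prems by (intro sum.cong refl) auto
  also have "\<dots> = g x a (a + 1) * ?W $$ (a + 1, b)" using a1 by simp
  also have "\<dots> = g x a (a + 1) * (if b = a + 1 + length w then \<Prod>s<length w. g (w ! s) (a + 1 + s) (a + 1 + s + 1) else 0)"
    using Cons.IH[of "a + 1"] Cons.prems by simp
  also have "\<dots> = (if b = a + length (x # w) then \<Prod>s<length (x # w). g ((x # w) ! s) (a + s) (a + s + 1) else 0)"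
    by (simp add: prod.lessThan_Suc_shift del: prod.lessThan_Suc)
  finally show ?case .
qed


section \<open>Low degree: faithfulness\<close>

lemma superdiag_zero_imp_zero:
  fixes f :: "'v list list \<Rightarrow>\<^sub>0 'a::field" and emb :: "'a \<Rightarrow> 'b::field" and X :: "nat \<Rightarrow> 'v set"
  assumes inf: "infinite (UNIV :: 'a set)" and fh: "field_hom emb"
    and disj: "\<forall>i<k. \<forall>j<k. i \<noteq> j \<longrightarrow> X i \<inter> X j = {}"
    and pc: "pc_poly k X f" and deg: "pc_degree f < n"
    and z: "\<And>q. pc_eval n k emb (\<lambda>_ x. mat n n (\<lambda>(a, b). if b = a + 1 then emb (q (x, a, b)) else 0)) f
          = 0\<^sub>m (n ^ k) (n ^ k)"
  shows "f = 0"
proof (rule ccontr)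
  assume "f \<noteq> 0"
  then obtain m0 where m0: "m0 \<in> Poly_Mapping.keys f" by (metis keys_eq_empty ex_in_conv)
  interpret field_hom emb by fact
  have mon: "length m = k \<and> (\<forall>i<k. set (m ! i) \<subseteq> X i)" if "m \<in> Poly_Mapping.keys f" for m
    using pc that by (auto simp: pc_poly_def pc_monomials_def)
  have sl: "sum_list (map length m) < n" if "m \<in> Poly_Mapping.keys f" for m
  proof -
    have "sum_list (map length m) \<le> pc_degree f" unfolding pc_degree_def
      by (rule Max_ge) (use that in auto)
    then show ?thesis using deg by simp
  qed
  have ln: "length (m ! j) < n" if "m \<in> Poly_Mapping.keys f" "j < k" for m j
  proof -
    have "length (m ! j) \<le> sum_list (map length m)"
      using elem_le_sum_list[of j "map length m"] mon[OF that(1)] that(2) by simp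
    then show ?thesis using sl[OF that(1)] by simp
  qed
  define L where "L = map length m0"
  have lenL: "length L = k" using mon[OF m0] by (simp add: L_def)
  have Ln: "\<forall>l\<in>set L. l < n"
    using ln[OF m0] mon[OF m0] by (auto simp: L_def in_set_conv_nth)
  define S where "S = {m \<in> Poly_Mapping.keys f. map length m = L}"
  have fS: "finite S" by (simp add: S_def)
  have m0S: "m0 \<in> S" by (simp add: S_def L_def m0)
  define \<mu> :: "'v list list \<Rightarrow> ('v \<times> nat \<times> nat) \<Rightarrow>\<^sub>0 nat" where
    "\<mu> m = (\<Sum>j<k. \<Sum>s<length (m ! j). Poly_Mapping.single (m ! j ! s, s, s + 1) 1)" for m
  have lookup_\<mu>: "Poly_Mapping.lookup (\<mu> m) y = (\<Sum>j<k. \<Sum>s<length (m ! j). (1 when (m ! j ! s, s, s + 1) = y))" for m y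
    by (simp add: \<mu>_def lookup_sum lookup_single)
  have ev\<mu>: "evalm q (\<mu> m) = (\<Prod>j<k. \<Prod>s<length (m ! j). q (m ! j ! s, s, s + 1))" for q m
    by (simp add: \<mu>_def evalm_sum)
  have npos: "0 < n" using deg by simp
  have cL: "colx n L < n ^ k" using colx_less[OF Ln] lenL by simp
  have entry: "(\<Sum>m\<in>S. Poly_Mapping.lookup f m * evalm q (\<mu> m)) = 0" for q
  proof -
    define V where "V = (\<lambda>(_::nat) x. mat n n (\<lambda>(a, b). if b = a + 1 then emb (q (x, a, b)) else 0))"
    have Vc: "V i x \<in> carrier_mat n n" for i x by (simp add: V_def)
    have trm: "kron_list (map (\<lambda>i. word_mat n (V i) (m ! i)) [0..<k]) $$ (0, colx n L) =
        (if m \<in> S then emb (evalm q (\<mu> m)) else 0)" if mf: "m \<in> Poly_Mapping.keys f" for m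
    proof -
      have "kron_list (map (\<lambda>i. word_mat n (V i) (m ! i)) [0..<k]) $$ (0, colx n L) =
          (\<Prod>j<k. word_mat n (V j) (m ! j) $$ (0, L ! j))"
        using kron_list_entry[of "map (\<lambda>i. word_mat n (V i) (m ! i)) [0..<k]" n L] Vc lenL Ln
        by (auto intro: word_mat_carrier)
      also have "\<dots> = (\<Prod>j<k. if L ! j = length (m ! j) then
            \<Prod>s<length (m ! j). emb (q (m ! j ! s, s, s + 1)) else 0)"
      proof (rule prod.cong[OF refl])
        fix j assume j: "j \<in> {..<k}"
        have Lj: "L ! j < n" using Ln lenL j by auto
        show "word_mat n (V j) (m ! j) $$ (0, L ! j) = (if L ! j = length (m ! j) then
            \<Prod>s<length (m ! j). emb (q (m ! j ! s, s, s + 1)) else 0)"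
          unfolding V_def using word_superdiag_entry[of 0 "m ! j" n "L ! j" "\<lambda>x a b. emb (q (x, a, b))"]
            ln[OF mf] j Lj by simp
      qed
      also have "\<dots> = (if m \<in> S then emb (evalm q (\<mu> m)) else 0)"
      proof (cases "m \<in> S")
        case True
        then have "L ! j = length (m ! j)" if "j < k" for j using that mon[OF mf] by (auto simp: S_def)
        then show ?thesis using True by (simp add: ev\<mu> hom_distribs)
      next
        case False
        have "\<exists>j<k. L ! j \<noteq> length (m ! j)"
        proof (rule ccontr)
          assume "\<not> ?thesis"
          then have "map length m = L" using mon[OF mf] lenL by (intro nth_equalityI) auto
          then show False using False mf by (simp add: S_def)
        qed
        then show ?thesis using False by auto
      qed
      finally show ?thesis .
    qed
    have "0 = pc_eval n k emb V f $$ (0, colx n L)" using z[of q] cL npos by (simp add: V_def)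
    also have "\<dots> = (\<Sum>m\<in>Poly_Mapping.keys f. emb (Poly_Mapping.lookup f m) *
        (if m \<in> S then emb (evalm q (\<mu> m)) else 0))"
      using cL npos by (simp add: pc_eval_def trm)
    also have "\<dots> = (\<Sum>m\<in>S. emb (Poly_Mapping.lookup f m * evalm q (\<mu> m)))"
      by (simp add: S_def sum.inter_filter[symmetric] hom_distribs if_distrib[of "(*) _"] cong: if_cong)
    also have "\<dots> = emb (\<Sum>m\<in>S. Poly_Mapping.lookup f m * evalm q (\<mu> m))"
      by (simp add: hom_distribs)
    finally show ?thesis by simp
  qed
  have inj: "inj_on \<mu> S"
  proof (rule inj_onI)
    fix m m' assume mS: "m \<in> S" and m'S: "m' \<in> S" and eq: "\<mu> m = \<mu> m'"
    have mf: "m \<in> Poly_Mapping.keys f" and m'f: "m' \<in> Poly_Mapping.keys f"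
      and lm: "map length m = L" and lm': "map length m' = L" using mS m'S by (auto simp: S_def)
    show "m = m'"
    proof (rule nth_equalityI)
      show "length m = length m'" using mon[OF mf] mon[OF m'f] by simp
      fix j assume "j < length m"
      then have j: "j < k" using mon[OF mf] by simp
      have lj: "length (m ! j) = length (m' ! j)"
        using lm lm' j mon[OF mf] mon[OF m'f] by (metis nth_map)
      show "m ! j = m' ! j"
      proof (rule nth_equalityI[OF lj])
        fix s assume s: "s < length (m ! j)"
        define x where "x = m ! j ! s"
        have xX: "x \<in> X j" using mon[OF mf] j nth_mem[OF s] unfolding x_def by blast
        have "Poly_Mapping.lookup (\<mu> m) (x, s, s + 1) \<noteq> 0"
          unfolding lookup_\<mu> using j s by (simp add: x_def when_def) blast
        then have "Poly_Mapping.lookup (\<mu> m') (x, s, s + 1) \<noteq> 0" using eq by simp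
        then obtain j' s' where j': "j' < k" and s': "s' < length (m' ! j')"
          and eq': "(m' ! j' ! s', s', s' + 1) = (x, s, s + 1)"
          unfolding lookup_\<mu> by (auto simp: when_def split: if_splits)
        have "x \<in> X j'" using eq' mon[OF m'f] j' s' by (auto dest: nth_mem)
        then have "j' = j" using disj j j' xX by blast
        then show "m ! j ! s = m' ! j ! s" using eq' by (auto simp: x_def)
      qed
    qed
  qed
  have "Poly_Mapping.lookup f m0 = 0"
    by (rule multivariate_zero[OF inf fS inj entry m0S])
  then show False using m0 by (simp add: in_keys_iff)
qed

theorem proposition1:
  fixes X :: "nat \<Rightarrow> 'v set" and f :: "'v list list \<Rightarrow>\<^sub>0 'a::field"
    and emb :: "'a \<Rightarrow> 'b::field" and k n :: nat
  assumes "infinite (UNIV :: 'a set)"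
    and "k \<ge> 1" and "n \<ge> 1"
    and "\<forall>i<k. finite (X i)"
    and "\<forall>i<k. \<forall>j<k. i \<noteq> j \<longrightarrow> X i \<inter> X j = {}"
    and "pc_poly k X f"
    and "field_hom emb"
  shows "(pc_identity n k X emb f \<longleftrightarrow> Phi n k f = 0\<^sub>m (n ^ k) (n ^ k))
    \<and> (pc_degree f < n \<longrightarrow>
         (pc_identity n k X emb f \<longleftrightarrow> Psi n k f = 0\<^sub>m (n ^ k) (n ^ k))
       \<and> (pc_identity n k X emb f \<longleftrightarrow> f = 0))"
proof -
  note inf = assms(1) and disj = assms(5) and pc = assms(6) and fh = assms(7)
  have crh: "comm_ring_hom emb" using fh by (rule field_hom_crh)
  have part1: "pc_identity n k X emb f \<longleftrightarrow> Phi n k f = 0\<^sub>m (n ^ k) (n ^ k)"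
  proof
    assume "pc_identity n k X emb f"
    then show "Phi n k f = 0\<^sub>m (n ^ k) (n ^ k)" unfolding Phi_def
      by (rule identity_imp_generic_zero[OF inf fh, rotated]) (simp add: generic_mat_def)
  next
    assume "Phi n k f = 0\<^sub>m (n ^ k) (n ^ k)"
    then show "pc_identity n k X emb f" by (rule Phi_zero_imp_identity[OF fh disj pc])
  qed
  have SD: "map_mat (evalp emb (emb \<circ> q)) (superdiag_mat n x) =
      mat n n (\<lambda>(a, b). if b = a + 1 then emb (q (x, a, b)) else 0)" for q x
    by (simp add: eval_superdiag_mat[OF crh] o_def)
  have part2: "pc_identity n k X emb f \<longleftrightarrow> f = 0" if deg: "pc_degree f < n"
  proof
    assume id: "pc_identity n k X emb f"
    show "f = 0"
    proof (rule superdiag_zero_imp_zero[OF inf fh disj pc deg])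
      fix q :: "'v \<times> nat \<times> nat \<Rightarrow> 'a"
      show "pc_eval n k emb (\<lambda>_ x. mat n n (\<lambda>(a, b). if b = a + 1 then emb (q (x, a, b)) else 0)) f
          = 0\<^sub>m (n ^ k) (n ^ k)"
        using id unfolding pc_identity_def by auto
    qed
  next
    assume "f = 0"
    then show "pc_identity n k X emb f" by (simp add: pc_identity_def pc_eval_zero)
  qed
  have part3: "Psi n k f = 0\<^sub>m (n ^ k) (n ^ k) \<longleftrightarrow> f = 0" if deg: "pc_degree f < n"
  proof
    assume z: "Psi n k f = 0\<^sub>m (n ^ k) (n ^ k)"
    show "f = 0"
    proof (rule superdiag_zero_imp_zero[OF inf fh disj pc deg])
      fix q :: "'v \<times> nat \<times> nat \<Rightarrow> 'a"
      have "pc_eval n k emb (\<lambda>_ x. map_mat (evalp emb (emb \<circ> q)) (superdiag_mat n x)) f = 0\<^sub>m (n ^ k) (n ^ k)"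
        by (rule generic_zero_imp_eval_zero[OF fh _ z[unfolded Psi_def]]) (simp add: superdiag_mat_def)
      then show "pc_eval n k emb (\<lambda>_ x. mat n n (\<lambda>(a, b). if b = a + 1 then emb (q (x, a, b)) else 0)) f
          = 0\<^sub>m (n ^ k) (n ^ k)"
        by (simp only: SD)
    qed
  next
    assume "f = 0"
    then show "Psi n k f = 0\<^sub>m (n ^ k) (n ^ k)" by (simp add: Psi_def pc_eval_zero)
  qed
  show ?thesis using part1 part2 part3 by blast
qed

end
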